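(* Let $n\in\mathbb N$, $\alpha>0$, and let $Q\subset\mathbb R^n$ be a cube with sides parallel to the axes and side length $r=\ell(Q)\le1$; let $2Q$ be the concentric cube of side $2r$. Then there is a constant $C$ depending only on $n$ and $\alpha$ such that for every measurable $g:\mathbb R^n\to[0,\infty)$ and every $x\in Q$, $$\int_{2Q}\frac{g(y)}{|x-y|^{n-\alpha}}\,dy\le C\int_Q\frac{Mg(y)}{|x-y|^{n-\alpha}}\,dy.$$
   Context: $Mg(y)=\sup_{\rho>0}\frac{1}{|B(y,\rho)|}\int_{B(y,\rho)}|g|$ is the Hardy–Littlewood maximal function. *)

theory Defs
  imports "HOL-Analysis.Analysis"
begin

definition cube :: "'a::euclidean_space \<Rightarrow> real \<Rightarrow> 'a set" where
  "cube c r = cbox (c - (r/2) *\<^sub>R One) (c + (r/2) *\<^sub>R One)"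

definition maximal_fn :: "('a::euclidean_space \<Rightarrow> real) \<Rightarrow> 'a \<Rightarrow> ennreal" where
  "maximal_fn g y = (SUP \<rho>\<in>{0<..}.
      (\<integral>\<^sup>+ z\<in>ball y \<rho>. ennreal \<bar>g z\<bar> \<partial>lebesgue) / emeasure lebesgue (ball y \<rho>))"

end

theory Submission
  imports Defs
begin

lemma sf_lebesgue: "sigma_finite_measure (lebesgue :: 'a::euclidean_space measure)"
proof -
  obtain A :: "'a set set" where A: "countable A" "A \<subseteq> sets lborel" "\<Union>A = space lborel"
      "\<forall>a\<in>A. emeasure lborel a \<noteq> \<infinity>"
    using sigma_finite_measure.sigma_finite_countable[OF sigma_finite_lborel] by blast
  have "A \<subseteq> sets lebesgue" using A(2) by blast
  moreover have "\<forall>a\<in>A. emeasure lebesgue a \<noteq> \<infinity>"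
  proof
    fix a assume "a \<in> A"
    hence "a \<in> sets lborel" using A(2) by blast
    thus "emeasure lebesgue a \<noteq> \<infinity>" using A(4) \<open>a \<in> A\<close> by simp
  qed
  moreover have "\<Union>A = space lebesgue" using A(3) by simp
  ultimately show ?thesis
    using A(1) by (intro sigma_finite_measure.intro exI[of _ A]) blast
qed

lemma norm_sq_coord: "(norm (v::'a::euclidean_space))^2 = (\<Sum>i\<in>Basis. (v \<bullet> i)^2)"
  unfolding power2_norm_eq_inner by (subst euclidean_inner) (simp add: power2_eq_square)

lemma norm_le_coord:
  fixes v :: "'a::euclidean_space"
  assumes "\<And>i. i\<in>Basis \<Longrightarrow> \<bar>v\<bullet>i\<bar> \<le> a"
  shows "norm v \<le> sqrt DIM('a) * a"
proof -
  obtain i :: 'a where "i \<in> Basis" using nonempty_Basis by blast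
  hence a0: "0 \<le> a" using assms[of i] by linarith
  have "(\<Sum>i\<in>Basis. (v \<bullet> i)^2) \<le> (\<Sum>i\<in>(Basis::'a set). a^2)"
  proof (intro sum_mono)
    fix i :: 'a assume "i \<in> Basis"
    have "\<bar>v \<bullet> i\<bar>^2 \<le> a^2" by (rule power_mono) (use assms \<open>i \<in> Basis\<close> in auto)
    thus "(v \<bullet> i)^2 \<le> a^2" by simp
  qed
  also have "\<dots> = (sqrt DIM('a) * a)^2" by (simp add: power_mult_distrib)
  finally have "(norm v)^2 \<le> (sqrt DIM('a) * a)^2" by (simp only: norm_sq_coord)
  thus ?thesis by (rule power2_le_imp_le) (simp add: a0)
qed

lemma norm_ge_coord:
  fixes v :: "'a::euclidean_space"
  assumes "\<And>i. i\<in>Basis \<Longrightarrow> b \<le> \<bar>v\<bullet>i\<bar>" "0 \<le> b"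
  shows "sqrt DIM('a) * b \<le> norm v"
proof -
  have "(sqrt DIM('a) * b)^2 = (\<Sum>i\<in>(Basis::'a set). b^2)" by (simp add: power_mult_distrib)
  also have "\<dots> \<le> (\<Sum>i\<in>Basis. (v \<bullet> i)^2)"
  proof (intro sum_mono)
    fix i :: 'a assume "i \<in> Basis"
    have "b^2 \<le> \<bar>v \<bullet> i\<bar>^2" by (rule power_mono) (use assms \<open>i \<in> Basis\<close> in auto)
    thus "b^2 \<le> (v \<bullet> i)^2" by simp
  qed
  finally have "(sqrt DIM('a) * b)^2 \<le> (norm v)^2" by (simp only: norm_sq_coord)
  thus ?thesis by (rule power2_le_imp_le) simp
qed
lemma id_LL: "(\<lambda>p. p) \<in> ((lebesgue::'a::euclidean_space measure) \<Otimes>\<^sub>M (lebesgue::'a measure)) \<rightarrow>\<^sub>M ((lborel::'a measure) \<Otimes>\<^sub>M (lborel::'a measure))"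
proof -
  have l: "(\<lambda>z. z) \<in> (lebesgue::'a measure) \<rightarrow>\<^sub>M lborel"
    by (rule measurable_completion) simp
  show ?thesis unfolding measurable_pair_iff
    using measurable_compose[OF measurable_fst[of lebesgue lebesgue] l] measurable_compose[OF measurable_snd[of lebesgue lebesgue] l]
    by (simp add: comp_def)
qed


definition wt :: "real \<Rightarrow> real \<Rightarrow> 'a::euclidean_space \<Rightarrow> 'a \<Rightarrow> real" where
  "wt \<alpha> V x z = (1 / (dist x z powr (real DIM('a) - \<alpha>))) / (V * (8 * dist x z)^DIM('a))"

lemma meas_G0:
  fixes Q :: "'a::euclidean_space set"
  assumes [measurable]: "Q \<in> sets borel"
  shows "(\<lambda>(z,y). wt \<alpha> V x z * indicator Q z *
            (if dist z y < 8 * dist x z then 1 else 0)) \<in> borel_measurable (lborel \<Otimes>\<^sub>M lborel)"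
  unfolding wt_def by measurable

lemma meas_G0':
  fixes Q :: "'a::euclidean_space set"
  assumes [measurable]: "Q \<in> sets borel"
  shows "(\<lambda>(y,z). wt \<alpha> V x z * indicator Q z *
            (if dist z y < 8 * dist x z then 1 else 0)) \<in> borel_measurable (lborel \<Otimes>\<^sub>M lborel)"
  unfolding wt_def by measurable

lemma meas_G1:
  fixes Q :: "'a::euclidean_space set"
  assumes [measurable]: "Q \<in> sets borel"
  shows "(\<lambda>z. ennreal (wt \<alpha> V x z * indicator Q z *
            (if dist z y < 8 * dist x z then 1 else 0))) \<in> borel_measurable lebesgue"
  by (rule measurable_completion) (unfold wt_def, measurable)

lemma meas_F:
  fixes g :: "'a::euclidean_space \<Rightarrow> real" and Q :: "'a set"
  assumes [measurable]: "g \<in> borel_measurable lebesgue" "Q \<in> sets borel"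
  shows "(\<lambda>(z,y). ennreal (wt \<alpha> V x z * indicator Q z *
            (if dist z y < 8 * dist x z then 1 else 0) * g y)) \<in> borel_measurable (lebesgue \<Otimes>\<^sub>M lebesgue)"
proof -
  have 1: "(\<lambda>p. (\<lambda>(z,y). wt \<alpha> V x z * indicator Q z *
            (if dist z y < 8 * dist x z then 1 else 0)) p) \<in> borel_measurable (lebesgue \<Otimes>\<^sub>M lebesgue)"
    by (rule measurable_compose[OF id_LL meas_G0]) simp
  have 2: "(\<lambda>p. g (snd p)) \<in> borel_measurable (lebesgue \<Otimes>\<^sub>M lebesgue)" by measurable
  show ?thesis using borel_measurable_times[OF 1 2] by (simp add: case_prod_beta')
qed

lemma meas_F':
  fixes g :: "'a::euclidean_space \<Rightarrow> real" and Q :: "'a set"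
  assumes [measurable]: "g \<in> borel_measurable lebesgue" "Q \<in> sets borel"
  shows "(\<lambda>(y,z). ennreal (wt \<alpha> V x z * indicator Q z *
            (if dist z y < 8 * dist x z then 1 else 0) * g y)) \<in> borel_measurable (lebesgue \<Otimes>\<^sub>M lebesgue)"
proof -
  have 1: "(\<lambda>p. (\<lambda>(y,z). wt \<alpha> V x z * indicator Q z *
            (if dist z y < 8 * dist x z then 1 else 0)) p) \<in> borel_measurable (lebesgue \<Otimes>\<^sub>M lebesgue)"
    by (rule measurable_compose[OF id_LL meas_G0']) simp
  have 2: "(\<lambda>p. g (fst p)) \<in> borel_measurable (lebesgue \<Otimes>\<^sub>M lebesgue)" by measurable
  show ?thesis using borel_measurable_times[OF 1 2] by (simp add: case_prod_beta')
qed

lemma powr_between: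
  fixes t d e :: real
  assumes "0 < t" "t/6 \<le> d" "d \<le> t/3"
  shows "min ((1/6) powr e) ((1/3) powr e) * t powr e \<le> d powr e"
proof (cases "0 \<le> e")
  case True
  have "(t/6) powr e \<le> d powr e" by (rule powr_mono2) (use True assms in auto)
  moreover have "(t/6) powr e = (1/6) powr e * t powr e" using assms by (simp add: powr_divide)
  moreover have "min ((1/6) powr e) ((1/3) powr e) * t powr e \<le> (1/6) powr e * t powr e"
    by (rule mult_right_mono) auto
  ultimately show ?thesis by linarith
next
  case False
  have "(t/3) powr e \<le> d powr e" by (rule powr_mono2') (use False assms in auto)
  moreover have "(t/3) powr e = (1/3) powr e * t powr e" using assms by (simp add: powr_divide)
  moreover have "min ((1/6) powr e) ((1/3) powr e) * t powr e \<le> (1/3) powr e * t powr e"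
    by (rule mult_right_mono) auto
  ultimately show ?thesis by linarith
qed

lemma kern_eq: "1 / (d::real) powr (n - \<alpha>) = d powr (\<alpha> - n)"
  using powr_minus_divide[of d "n - \<alpha>"] by simp


lemma cube_coords:
  fixes x c :: "'a::euclidean_space"
  assumes "x \<in> cube c r" "i \<in> Basis"
  shows "c\<bullet>i - r/2 \<le> x\<bullet>i \<and> x\<bullet>i \<le> c\<bullet>i + r/2"
  using assms unfolding cube_def mem_box by (auto simp: inner_diff_left inner_add_left)

lemma cube_coordsI:
  fixes x c :: "'a::euclidean_space"
  assumes "\<And>i. i \<in> Basis \<Longrightarrow> c\<bullet>i - r/2 \<le> x\<bullet>i \<and> x\<bullet>i \<le> c\<bullet>i + r/2"
  shows "x \<in> cube c r"
  using assms unfolding cube_def mem_box by (auto simp: inner_diff_left inner_add_left)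

lemma inner_lower:
  fixes x y c :: "'a::euclidean_space"
  assumes r: "0 < r" and xQ: "x \<in> cube c r" and yQ: "y \<in> cube c (2*r)"
    and V: "V = unit_ball_vol (real DIM('a))"
    and \<kappa>: "\<kappa> = min ((1/6) powr (\<alpha> - 2*real DIM('a))) ((1/3) powr (\<alpha> - 2*real DIM('a))) /
              (V * 8^DIM('a) * (6 * sqrt (real DIM('a)))^DIM('a))"
  shows "ennreal (\<kappa> * (1 / dist x y powr (real DIM('a) - \<alpha>)))
     \<le> (\<integral>\<^sup>+ z. ennreal (wt \<alpha> V x z * indicator (cube c r) z *
            (if dist z y < 8 * dist x z then 1 else 0)) \<partial>lebesgue)"
proof (cases "y = x")
  case True
  thus ?thesis by simp
next
  case False
  define N where "N = real DIM('a)"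
  define e where "e = \<alpha> - 2*N"
  define m where "m = min ((1/6) powr e) ((1/3) powr e)"
  define t where "t = dist x y"
  have t0: "0 < t" using False by (simp add: t_def)
  have N0: "0 < N" by (simp add: N_def)
  have sN0: "0 < sqrt N" using N0 by simp
  define s where "s = t / (3 * sqrt N)"
  have s0: "0 < s" using t0 sN0 by (simp add: s_def)
  have V0: "0 < V" using V by simp
  have "t \<le> sqrt N * (3/2 * r)"
  proof -
    have "norm (x - y) \<le> sqrt DIM('a) * (3/2 * r)"
    proof (rule norm_le_coord)
      fix i :: 'a assume i: "i \<in> Basis"
      have "c\<bullet>i - r/2 \<le> x\<bullet>i \<and> x\<bullet>i \<le> c\<bullet>i + r/2" by (rule cube_coords[OF xQ i])
      moreover have "c\<bullet>i - (2*r)/2 \<le> y\<bullet>i \<and> y\<bullet>i \<le> c\<bullet>i + (2*r)/2" by (rule cube_coords[OF yQ i])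
      ultimately show "\<bar>(x - y) \<bullet> i\<bar> \<le> 3/2 * r" unfolding inner_diff_left abs_le_iff by linarith
    qed
    thus ?thesis by (simp add: t_def dist_norm N_def)
  qed
  hence sr: "s \<le> r/2" using sN0 unfolding s_def by (simp add: field_simps)
  define l :: 'a where "l = (\<Sum>i\<in>Basis. (if x\<bullet>i \<le> c\<bullet>i then x\<bullet>i + s/2 else x\<bullet>i - s) *\<^sub>R i)"
  have li: "\<And>i. i \<in> Basis \<Longrightarrow> l\<bullet>i = (if x\<bullet>i \<le> c\<bullet>i then x\<bullet>i + s/2 else x\<bullet>i - s)"
    by (simp add: l_def)
  define B where "B = cbox l (l + (s/2) *\<^sub>R One)"
  have zB: "\<And>z i. z \<in> B \<Longrightarrow> i \<in> Basis \<Longrightarrow> l\<bullet>i \<le> z\<bullet>i \<and> z\<bullet>i \<le> l\<bullet>i + s/2"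
    unfolding B_def mem_box by (auto simp: inner_add_left)
  define \<beta> where "\<beta> = m * t powr e / (V * 8^DIM('a))"
  have key: "ennreal (\<beta> * indicator B z) \<le> ennreal (wt \<alpha> V x z * indicator (cube c r) z *
            (if dist z y < 8 * dist x z then 1 else 0))" for z
  proof (cases "z \<in> B")
    case False thus ?thesis by simp
  next
    case True
    have co: "s/2 \<le> \<bar>(z - x)\<bullet>i\<bar> \<and> \<bar>(z - x)\<bullet>i\<bar> \<le> s"
      and cq: "c\<bullet>i - r/2 \<le> z\<bullet>i \<and> z\<bullet>i \<le> c\<bullet>i + r/2" if i: "i \<in> Basis" for i
    proof -
      have a: "l\<bullet>i \<le> z\<bullet>i \<and> z\<bullet>i \<le> l\<bullet>i + s/2" by (rule zB[OF True i])
      have b: "c\<bullet>i - r/2 \<le> x\<bullet>i \<and> x\<bullet>i \<le> c\<bullet>i + r/2" by (rule cube_coords[OF xQ i])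
      show "s/2 \<le> \<bar>(z - x)\<bullet>i\<bar> \<and> \<bar>(z - x)\<bullet>i\<bar> \<le> s"
        using a li[OF i] s0 by (auto simp: inner_diff_left abs_if split: if_splits)
      show "c\<bullet>i - r/2 \<le> z\<bullet>i \<and> z\<bullet>i \<le> c\<bullet>i + r/2"
        using a b li[OF i] s0 sr by (auto split: if_splits)
    qed
    have zQ: "z \<in> cube c r" by (rule cube_coordsI) (use cq in blast)
    define d where "d = dist x z"
    have "sqrt DIM('a) * (s/2) \<le> norm (z - x)"
      by (rule norm_ge_coord) (use co s0 in auto)
    hence d1: "t/6 \<le> d" using sN0 unfolding d_def s_def N_def by (simp add: dist_norm norm_minus_commute field_simps)
    have "norm (z - x) \<le> sqrt DIM('a) * s"
      by (rule norm_le_coord) (use co in auto)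
    hence d2: "d \<le> t/3" using sN0 unfolding d_def s_def N_def by (simp add: dist_norm norm_minus_commute field_simps)
    have d0: "0 < d" using d1 t0 by linarith
    have "dist z y \<le> d + t" using dist_triangle[of z y x] unfolding d_def t_def by (simp add: dist_commute)
    hence near: "dist z y < 8 * dist x z" using d1 d0 d_def by linarith
    have wt: "wt \<alpha> V x z = d powr e / (V * 8^DIM('a))"
    proof -
      have "wt \<alpha> V x z = d powr (\<alpha> - N) / (V * (8^DIM('a) * d powr N))"
        unfolding wt_def d_def[symmetric] kern_eq N_def using d0 by (simp add: powr_realpow power_mult_distrib)
      also have "\<dots> = (d powr (\<alpha> - N) / d powr N) / (V * 8^DIM('a))" by (simp add: field_simps)
      also have "d powr (\<alpha> - N) / d powr N = d powr e" unfolding e_def by (simp add: powr_diff[symmetric])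
      finally show ?thesis .
    qed
    have "m * t powr e \<le> d powr e" unfolding m_def by (rule powr_between[OF t0 d1 d2])
    hence "\<beta> \<le> wt \<alpha> V x z" unfolding wt \<beta>_def using V0 by (simp add: divide_right_mono)
    thus ?thesis using True zQ near by (simp add: ennreal_leI)
  qed
  have Bmeas: "B \<in> sets lborel" unfolding B_def by simp
  have "emeasure lebesgue B = emeasure lborel B" using Bmeas by simp
  also have "\<dots> = ennreal ((s/2)^DIM('a))"
  proof -
    have "emeasure lborel B = ennreal (\<Prod>b\<in>Basis. ((l + (s/2) *\<^sub>R One) - l) \<bullet> b)"
      unfolding B_def by (rule emeasure_lborel_cbox) (use s0 in \<open>simp add: inner_add_left\<close>)
    also have "(\<Prod>b\<in>Basis. ((l + (s/2) *\<^sub>R One) - l) \<bullet> b) = (\<Prod>b\<in>(Basis::'a set). s/2)"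
      by (intro prod.cong) auto
    also have "\<dots> = (s/2)^DIM('a)" by simp
    finally show ?thesis .
  qed
  finally have mB: "emeasure lebesgue B = ennreal ((s/2)^DIM('a))" .
  have "(\<integral>\<^sup>+ z. ennreal (\<beta> * indicator B z) \<partial>lebesgue) \<le> (\<integral>\<^sup>+ z. ennreal (wt \<alpha> V x z * indicator (cube c r) z *
            (if dist z y < 8 * dist x z then 1 else 0)) \<partial>lebesgue)"
    by (rule nn_integral_mono) (rule key)
  moreover have "(\<integral>\<^sup>+ z. ennreal (\<beta> * indicator B z) \<partial>lebesgue) = ennreal (\<beta> * (s/2)^DIM('a))"
  proof -
    have b0: "0 \<le> \<beta>" unfolding \<beta>_def m_def using V0 by simp
    have "(\<integral>\<^sup>+ z. ennreal (\<beta> * indicator B z) \<partial>lebesgue) = (\<integral>\<^sup>+ z. ennreal \<beta> * indicator B z \<partial>lebesgue)"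
      by (intro nn_integral_cong) (simp add: indicator_def)
    also have "\<dots> = ennreal \<beta> * emeasure lebesgue B" using Bmeas by (intro nn_integral_cmult_indicator) simp
    also have "\<dots> = ennreal (\<beta> * (s/2)^DIM('a))" using b0 s0 by (simp add: mB ennreal_mult)
    finally show ?thesis .
  qed
  moreover have "\<beta> * (s/2)^DIM('a) = \<kappa> * (1 / dist x y powr (real DIM('a) - \<alpha>))"
  proof -
    have A0: "0 < (6 * sqrt N)^DIM('a)" using sN0 by simp
    have "(s/2)^DIM('a) = t^DIM('a) / (6 * sqrt N)^DIM('a)" unfolding s_def by (simp add: power_divide)
    also have "t^DIM('a) = t powr N" using t0 by (simp add: powr_realpow N_def)
    finally have sp: "(s/2)^DIM('a) = t powr N / (6 * sqrt N)^DIM('a)" .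
    have "\<beta> * (s/2)^DIM('a) = (m / (V * 8^DIM('a) * (6 * sqrt N)^DIM('a))) * (t powr e * t powr N)"
      unfolding \<beta>_def sp using V0 A0 by (simp add: field_simps)
    moreover have "t powr e * t powr N = 1 / dist x y powr (real DIM('a) - \<alpha>)"
      unfolding kern_eq t_def[symmetric] e_def N_def by (simp add: powr_add[symmetric])
    moreover have "\<kappa> = m / (V * 8^DIM('a) * (6 * sqrt N)^DIM('a))"
      unfolding \<kappa> m_def e_def N_def ..
    ultimately show ?thesis by simp
  qed
  ultimately show ?thesis by simp
qed


lemma wt_nonneg: "0 < V \<Longrightarrow> 0 \<le> wt \<alpha> V x z"
  unfolding wt_def by simp

lemma meas_row:
  fixes g :: "'a::euclidean_space \<Rightarrow> real"
  assumes gm: "g \<in> borel_measurable lebesgue"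
  shows "(\<lambda>y. ennreal ((if dist z y < \<rho> then 1 else 0) * g y)) \<in> borel_measurable lebesgue"
proof -
  have "(\<lambda>y. if dist z y < \<rho> then 1 else (0::real)) \<in> borel_measurable lborel" by measurable
  hence "(\<lambda>y. if dist z y < \<rho> then 1 else (0::real)) \<in> borel_measurable lebesgue"
    by (rule measurable_completion)
  from borel_measurable_times[OF this gm] show ?thesis by measurable
qed

lemma max_lower:
  fixes g :: "'a::euclidean_space \<Rightarrow> real"
  assumes g0: "\<forall>y. 0 \<le> g y" and V: "V = unit_ball_vol (real DIM('a))"
  shows "ennreal (wt \<alpha> V x z) * (\<integral>\<^sup>+ y. ennreal ((if dist z y < 8 * dist x z then 1 else 0) * g y) \<partial>lebesgue)
    \<le> maximal_fn g z * ennreal (1 / dist x z powr (real DIM('a) - \<alpha>))"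
proof (cases "z = x")
  case True thus ?thesis by (simp add: wt_def)
next
  case False
  define \<rho> where "\<rho> = 8 * dist x z"
  have \<rho>0: "0 < \<rho>" using False by (simp add: \<rho>_def)
  define I where "I = (\<integral>\<^sup>+ y. ennreal ((if dist z y < \<rho> then 1 else 0) * g y) \<partial>lebesgue)"
  define K where "K = 1 / dist x z powr (real DIM('a) - \<alpha>)"
  have K0: "0 \<le> K" unfolding K_def by simp
  have V0: "0 < V" using V by simp
  define A where "A = V * \<rho>^DIM('a)"
  have A0: "0 < A" unfolding A_def using V0 \<rho>0 by simp
  have bm: "emeasure lebesgue (ball z \<rho>) = ennreal A"
  proof -
    have "ball z \<rho> \<in> sets lborel" by simp
    hence "emeasure lebesgue (ball z \<rho>) = emeasure lborel (ball z \<rho>)" by simp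
    thus ?thesis using emeasure_ball[where c=z and r=\<rho>] V \<rho>0 unfolding A_def by (simp add: mult.commute)
  qed
  have "I = (\<integral>\<^sup>+ y\<in>ball z \<rho>. ennreal \<bar>g y\<bar> \<partial>lebesgue)"
    unfolding I_def by (intro nn_integral_cong) (auto simp: indicator_def g0 dist_commute)
  hence "I / emeasure lebesgue (ball z \<rho>) \<le> maximal_fn g z"
    unfolding maximal_fn_def using \<rho>0 by (intro SUP_upper2[where i=\<rho>]) auto
  hence "I * ennreal (1 / A) \<le> maximal_fn g z"
    using A0 by (simp add: bm divide_ennreal_def inverse_ennreal inverse_eq_divide)
  hence "I * ennreal (1 / A) * ennreal K \<le> maximal_fn g z * ennreal K" by (rule mult_right_mono) simp
  moreover have "ennreal (wt \<alpha> V x z) = ennreal (1 / A) * ennreal K"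
  proof -
    have "wt \<alpha> V x z = (1 / A) * K" unfolding wt_def A_def K_def \<rho>_def by simp
    moreover have "ennreal (1/A) * ennreal K = ennreal ((1/A) * K)"
      by (rule ennreal_mult[symmetric]) (use A0 K0 in auto)
    ultimately show ?thesis by simp
  qed
  ultimately show ?thesis unfolding I_def K_def \<rho>_def by (simp add: mult_ac)
qed

theorem lemma5p1:
  fixes \<alpha> :: real
  assumes "\<alpha> > 0"
  shows "\<exists>C::real. \<forall>(c::'a::euclidean_space) r g x.
           0 < r \<longrightarrow> r \<le> 1 \<longrightarrow>
           g \<in> borel_measurable lebesgue \<longrightarrow> (\<forall>y. 0 \<le> g y) \<longrightarrow>
           x \<in> cube c r \<longrightarrow>
           (\<integral>\<^sup>+ y\<in>cube c (2*r). ennreal (g y / dist x y powr (real DIM('a) - \<alpha>)) \<partial>lebesgue)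
             \<le> ennreal C * (\<integral>\<^sup>+ y\<in>cube c r.
                   maximal_fn g y * ennreal (1 / dist x y powr (real DIM('a) - \<alpha>)) \<partial>lebesgue)"
proof -
  define V where "V = unit_ball_vol (real DIM('a))"
  define \<kappa> where "\<kappa> = min ((1/6) powr (\<alpha> - 2*real DIM('a))) ((1/3) powr (\<alpha> - 2*real DIM('a))) /
              (V * 8^DIM('a) * (6 * sqrt (real DIM('a)))^DIM('a))"
  have V0: "0 < V" unfolding V_def by simp
  have \<kappa>0: "0 < \<kappa>" unfolding \<kappa>_def using V0 by simp
  interpret LL: pair_sigma_finite "lebesgue::'a measure" "lebesgue::'a measure"
    by (intro pair_sigma_finite.intro sf_lebesgue)
  show ?thesis
  proof (intro exI[of _ "1/\<kappa>"] allI impI)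
    fix c :: 'a and r :: real and g :: "'a \<Rightarrow> real" and x :: 'a
    assume r0: "0 < r" and "r \<le> 1" and gm: "g \<in> borel_measurable lebesgue"
      and g0: "\<forall>y. 0 \<le> g y" and xQ: "x \<in> cube c r"
    have Qb: "cube c r \<in> sets borel" unfolding cube_def by simp
    define F where "F = (\<lambda>z y. ennreal (wt \<alpha> V x z * indicator (cube c r) z *
            (if dist z y < 8 * dist x z then 1 else 0) * g y))"
    have Fm: "case_prod F \<in> borel_measurable (lebesgue \<Otimes>\<^sub>M lebesgue)"
      unfolding F_def by (rule meas_F[OF gm Qb])
    have Fm': "(\<lambda>(y,z). F z y) \<in> borel_measurable (lebesgue \<Otimes>\<^sub>M lebesgue)"
      unfolding F_def by (rule meas_F'[OF gm Qb])
    have step1: "(\<integral>\<^sup>+ z. (\<integral>\<^sup>+ y. F z y \<partial>lebesgue) \<partial>lebesgue)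
        \<le> (\<integral>\<^sup>+ z\<in>cube c r. maximal_fn g z * ennreal (1 / dist x z powr (real DIM('a) - \<alpha>)) \<partial>lebesgue)"
    proof (rule nn_integral_mono)
      fix z
      show "(\<integral>\<^sup>+ y. F z y \<partial>lebesgue)
        \<le> maximal_fn g z * ennreal (1 / dist x z powr (real DIM('a) - \<alpha>)) * indicator (cube c r) z"
      proof (cases "z \<in> cube c r")
        case False thus ?thesis by (simp add: F_def)
      next
        case True
        have "(\<integral>\<^sup>+ y. F z y \<partial>lebesgue) = (\<integral>\<^sup>+ y. ennreal (wt \<alpha> V x z) *
             ennreal ((if dist z y < 8 * dist x z then 1 else 0) * g y) \<partial>lebesgue)"
        proof (intro nn_integral_cong)
          fix y
          have e1: "wt \<alpha> V x z * indicator (cube c r) z * (if dist z y < 8 * dist x z then 1 else 0) * g y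
              = wt \<alpha> V x z * ((if dist z y < 8 * dist x z then 1 else 0) * g y)" using True by simp
          have e2: "0 \<le> (if dist z y < 8 * dist x z then 1 else 0) * g y" using g0 by simp
          show "F z y = ennreal (wt \<alpha> V x z) * ennreal ((if dist z y < 8 * dist x z then 1 else 0) * g y)"
            unfolding F_def e1 by (rule ennreal_mult[OF wt_nonneg[OF V0] e2])
        qed
        also have "\<dots> = ennreal (wt \<alpha> V x z) * (\<integral>\<^sup>+ y. ennreal ((if dist z y < 8 * dist x z then 1 else 0) * g y) \<partial>lebesgue)"
          by (rule nn_integral_cmult) (rule meas_row[OF gm])
        also have "\<dots> \<le> maximal_fn g z * ennreal (1 / dist x z powr (real DIM('a) - \<alpha>))"
          by (rule max_lower[OF g0 V_def])
        finally show ?thesis using True by simp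
      qed
    qed
    have step2: "(\<integral>\<^sup>+ z. (\<integral>\<^sup>+ y. F z y \<partial>lebesgue) \<partial>lebesgue) = (\<integral>\<^sup>+ y. (\<integral>\<^sup>+ z. F z y \<partial>lebesgue) \<partial>lebesgue)"
      using LL.Fubini'[OF Fm] by simp
    have step3: "ennreal (g y / dist x y powr (real DIM('a) - \<alpha>)) * indicator (cube c (2*r)) y
        \<le> ennreal (1/\<kappa>) * (\<integral>\<^sup>+ z. F z y \<partial>lebesgue)" for y
    proof (cases "y \<in> cube c (2*r)")
      case False thus ?thesis by simp
    next
      case True
      define G where "G = (\<lambda>z. ennreal (wt \<alpha> V x z * indicator (cube c r) z *
            (if dist z y < 8 * dist x z then 1 else 0)))"
      have "(\<integral>\<^sup>+ z. F z y \<partial>lebesgue) = (\<integral>\<^sup>+ z. ennreal (g y) * G z \<partial>lebesgue)"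
      proof (intro nn_integral_cong)
        fix z
        have "0 \<le> wt \<alpha> V x z * indicator (cube c r) z * (if dist z y < 8 * dist x z then 1 else 0)"
          by (intro mult_nonneg_nonneg wt_nonneg[OF V0]) auto
        thus "F z y = ennreal (g y) * G z" unfolding F_def G_def using g0
          by (simp add: ennreal_mult[symmetric] mult_ac)
      qed
      also have "\<dots> = ennreal (g y) * (\<integral>\<^sup>+ z. G z \<partial>lebesgue)"
        unfolding G_def by (rule nn_integral_cmult) (rule meas_G1[OF Qb])
      finally have eq: "(\<integral>\<^sup>+ z. F z y \<partial>lebesgue) = ennreal (g y) * (\<integral>\<^sup>+ z. G z \<partial>lebesgue)" .
      have lo: "ennreal (\<kappa> * (1 / dist x y powr (real DIM('a) - \<alpha>))) \<le> (\<integral>\<^sup>+ z. G z \<partial>lebesgue)"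
        unfolding G_def by (rule inner_lower[OF r0 xQ True V_def \<kappa>_def])
      have "ennreal (g y / dist x y powr (real DIM('a) - \<alpha>))
          = ennreal (1/\<kappa>) * (ennreal (g y) * ennreal (\<kappa> * (1 / dist x y powr (real DIM('a) - \<alpha>))))"
      proof -
        define D where "D = dist x y powr (real DIM('a) - \<alpha>)"
        have D0: "0 \<le> D" unfolding D_def by simp
        have re: "g y / D = (1/\<kappa>) * (g y * (\<kappa> * (1 / D)))"
          using \<kappa>0 by simp
        have e1: "ennreal (g y) * ennreal (\<kappa> * (1 / D)) = ennreal (g y * (\<kappa> * (1 / D)))"
          by (rule ennreal_mult[symmetric]) (use g0 \<kappa>0 D0 in auto)
        have e2: "ennreal (1/\<kappa>) * ennreal (g y * (\<kappa> * (1 / D))) = ennreal ((1/\<kappa>) * (g y * (\<kappa> * (1 / D))))"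
          by (rule ennreal_mult[symmetric]) (use g0 \<kappa>0 D0 in auto)
        show ?thesis unfolding D_def[symmetric] e1 e2 re ..
      qed
      also have "\<dots> \<le> ennreal (1/\<kappa>) * (ennreal (g y) * (\<integral>\<^sup>+ z. G z \<partial>lebesgue))"
        by (intro mult_left_mono lo) auto
      finally show ?thesis using True eq by simp
    qed
    have "(\<integral>\<^sup>+ y\<in>cube c (2*r). ennreal (g y / dist x y powr (real DIM('a) - \<alpha>)) \<partial>lebesgue)
        \<le> (\<integral>\<^sup>+ y. ennreal (1/\<kappa>) * (\<integral>\<^sup>+ z. F z y \<partial>lebesgue) \<partial>lebesgue)"
      by (rule nn_integral_mono) (rule step3)
    also have "\<dots> = ennreal (1/\<kappa>) * (\<integral>\<^sup>+ y. (\<integral>\<^sup>+ z. F z y \<partial>lebesgue) \<partial>lebesgue)"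
      by (rule nn_integral_cmult)
        (rule sigma_finite_measure.borel_measurable_nn_integral[OF sf_lebesgue, of "\<lambda>y z. F z y", OF Fm'])
    also have "\<dots> \<le> ennreal (1/\<kappa>) * (\<integral>\<^sup>+ z\<in>cube c r. maximal_fn g z * ennreal (1 / dist x z powr (real DIM('a) - \<alpha>)) \<partial>lebesgue)"
      using step1 step2 by (intro mult_left_mono) auto
    finally show "(\<integral>\<^sup>+ y\<in>cube c (2*r). ennreal (g y / dist x y powr (real DIM('a) - \<alpha>)) \<partial>lebesgue)
             \<le> ennreal (1/\<kappa>) * (\<integral>\<^sup>+ y\<in>cube c r.
                   maximal_fn g y * ennreal (1 / dist x y powr (real DIM('a) - \<alpha>)) \<partial>lebesgue)" .
  qed
qed

end
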